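(* Let $S$ be an intra-regular $\Gamma$-AG$^{**}$-groupoid and $A\subseteq S$ nonempty. Then $A$ is a $\Gamma$-bi-ideal (respectively $\Gamma$-generalized bi-ideal) of $S$ if and only if $(A\Gamma S)\Gamma A=A$ and $A\Gamma A=A$.
   Context: Let $S$ and $\Gamma$ be nonempty sets with a map $S\times\Gamma\times S\to S$, $(x,\gamma,y)\mapsto x\gamma y$. $S$ is a $\Gamma$-AG-groupoid if $(x\gamma y)\delta z=(z\gamma y)\delta x$ for all $x,y,z\in S$, $\gamma,\delta\in\Gamma$; it is a $\Gamma$-AG$^{**}$-groupoid if moreover $a\alpha(b\beta c)=b\alpha(a\beta c)$ for all $a,b,c\in S$, $\alpha,\beta\in\Gamma$. For subsets $A,B\subseteq S$, $A\Gamma B=\{a\gamma b: a\in A,\gamma\in\Gamma,b\in B\}$. $S$ is intra-regular if for every $a\in S$ there exist $x,y\in S$ and $\beta,\gamma,\delta\in\Gamma$ with $a=(x\beta(a\delta a))\gamma y$. A nonempty subset $B\subseteq S$ is a $\Gamma$-generalized bi-ideal if $(B\Gamma S)\Gamma B\subseteq B$, and a $\Gamma$-bi-ideal if in addition $B\Gamma B\subseteq B$. *)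

theory Defs
  imports Main
begin

text \<open>A Gamma-groupoid: S is the type 'a, Gamma is the type 'g (types are nonempty),
  and the ternary map S x Gamma x S -> S is a function op.\<close>

definition gset_prod :: "('a \<Rightarrow> 'g \<Rightarrow> 'a \<Rightarrow> 'a) \<Rightarrow> 'a set \<Rightarrow> 'a set \<Rightarrow> 'a set" where
  "gset_prod op A B = {op a g b | a g b. a \<in> A \<and> b \<in> B}"

definition gamma_AG_groupoid :: "('a \<Rightarrow> 'g \<Rightarrow> 'a \<Rightarrow> 'a) \<Rightarrow> bool" where
  "gamma_AG_groupoid op \<longleftrightarrow>
     (\<forall>x y z \<gamma> \<delta>. op (op x \<gamma> y) \<delta> z = op (op z \<gamma> y) \<delta> x)"

definition gamma_AG2_groupoid :: "('a \<Rightarrow> 'g \<Rightarrow> 'a \<Rightarrow> 'a) \<Rightarrow> bool" where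
  "gamma_AG2_groupoid op \<longleftrightarrow> gamma_AG_groupoid op \<and>
     (\<forall>a b c \<alpha> \<beta>. op a \<alpha> (op b \<beta> c) = op b \<alpha> (op a \<beta> c))"

definition intra_regular :: "('a \<Rightarrow> 'g \<Rightarrow> 'a \<Rightarrow> 'a) \<Rightarrow> bool" where
  "intra_regular op \<longleftrightarrow>
     (\<forall>a. \<exists>x y \<beta> \<gamma> \<delta>. a = op (op x \<beta> (op a \<delta> a)) \<gamma> y)"

definition gen_bi_ideal :: "('a \<Rightarrow> 'g \<Rightarrow> 'a \<Rightarrow> 'a) \<Rightarrow> 'a set \<Rightarrow> bool" where
  "gen_bi_ideal op B \<longleftrightarrow> B \<noteq> {} \<and>
     gset_prod op (gset_prod op B UNIV) B \<subseteq> B"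

definition bi_ideal :: "('a \<Rightarrow> 'g \<Rightarrow> 'a \<Rightarrow> 'a) \<Rightarrow> 'a set \<Rightarrow> bool" where
  "bi_ideal op B \<longleftrightarrow> gen_bi_ideal op B \<and> gset_prod op B B \<subseteq> B"

end

theory Submission
  imports Defs
begin

lemma chainAA:
  fixes op :: "'a \<Rightarrow> 'g \<Rightarrow> 'a \<Rightarrow> 'a"
  assumes L: "\<And>x y z g d. op (op x g y) d z = op (op z g y) d x"
  and R: "\<And>a b c g d. op a g (op b d c) = op b g (op a d c)"
  and H: "a = (op (op x b (op a d a)) g y)"
  shows "a = (op a g (op (op a d (op (op (op y b x) b x) g y)) d a))"
proof -
  have "a = (op (op x b (op a d a)) g y)" by (rule H)
  also have "\<dots> = (op (op x b (op a d (op (op x b (op a d a)) g y))) g y)" using H by metis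
  also have "\<dots> = (op (op x b (op (op x b (op a d a)) d (op a g y))) g y)" by (simp only: R[of "a" "d" "(op x b (op a d a))" "g" "y"])
  also have "\<dots> = (op (op (op x b (op a d a)) b (op x d (op a g y))) g y)" by (simp only: R[of "x" "b" "(op x b (op a d a))" "d" "(op a g y)"])
  also have "\<dots> = (op (op (op (op x d (op a g y)) b (op a d a)) b x) g y)" by (simp only: L[of "x" "b" "(op a d a)" "b" "(op x d (op a g y))"])
  also have "\<dots> = (op (op y b x) g (op (op x d (op a g y)) b (op a d a)))" by (simp only: L[of "(op (op x d (op a g y)) b (op a d a))" "b" "x" "g" "y"])
  also have "\<dots> = (op (op y b x) g (op (op (op a d a) d (op a g y)) b x))" by (simp only: L[of "x" "d" "(op a g y)" "b" "(op a d a)"])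
  also have "\<dots> = (op (op (op a d a) d (op a g y)) g (op (op y b x) b x))" by (simp only: R[of "(op y b x)" "g" "(op (op a d a) d (op a g y))" "b" "x"])
  also have "\<dots> = (op (op (op (op y b x) b x) d (op a g y)) g (op a d a))" by (simp only: L[of "(op a d a)" "d" "(op a g y)" "g" "(op (op y b x) b x)"])
  also have "\<dots> = (op a g (op (op (op (op y b x) b x) d (op a g y)) d a))" by (simp only: R[of "(op (op (op y b x) b x) d (op a g y))" "g" "a" "d" "a"])
  also have "\<dots> = (op a g (op (op a d (op (op (op y b x) b x) g y)) d a))" by (simp only: R[of "(op (op y b x) b x)" "d" "a" "g" "y"])
  finally show ?thesis .
qed

lemma chainASA:
  fixes op :: "'a \<Rightarrow> 'g \<Rightarrow> 'a \<Rightarrow> 'a"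
  assumes L: "\<And>x y z g d. op (op x g y) d z = op (op z g y) d x"
  and R: "\<And>a b c g d. op a g (op b d c) = op b g (op a d c)"
  and H: "a = (op (op x b (op a d a)) g y)"
  shows "a = (op (op a b (op (op (op y d (op x g y)) b (op x d (op x b (op a d a)))) g y)) g a)"
proof -
  have "a = (op (op x b (op a d a)) g y)" by (rule H)
  also have "\<dots> = (op (op a b (op x d a)) g y)" by (simp only: R[of "x" "b" "a" "d" "a"])
  also have "\<dots> = (op (op y b (op x d a)) g a)" by (simp only: L[of "a" "b" "(op x d a)" "g" "y"])
  also have "\<dots> = (op (op y b (op x d (op (op x b (op a d a)) g y))) g a)" using H by metis
  also have "\<dots> = (op (op y b (op (op x b (op a d a)) d (op x g y))) g a)" by (simp only: R[of "x" "d" "(op x b (op a d a))" "g" "y"])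
  also have "\<dots> = (op (op (op x b (op a d a)) b (op y d (op x g y))) g a)" by (simp only: R[of "y" "b" "(op x b (op a d a))" "d" "(op x g y)"])
  also have "\<dots> = (op (op (op x b (op (op (op x b (op a d a)) g y) d a)) b (op y d (op x g y))) g a)" using H by metis
  also have "\<dots> = (op (op (op x b (op (op a g y) d (op x b (op a d a)))) b (op y d (op x g y))) g a)" by (simp only: L[of "(op x b (op a d a))" "g" "y" "d" "a"])
  also have "\<dots> = (op (op (op (op a g y) b (op x d (op x b (op a d a)))) b (op y d (op x g y))) g a)" by (simp only: R[of "x" "b" "(op a g y)" "d" "(op x b (op a d a))"])
  also have "\<dots> = (op (op (op (op y d (op x g y)) b (op x d (op x b (op a d a)))) b (op a g y)) g a)" by (simp only: L[of "(op a g y)" "b" "(op x d (op x b (op a d a)))" "b" "(op y d (op x g y))"])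
  also have "\<dots> = (op (op a b (op (op (op y d (op x g y)) b (op x d (op x b (op a d a)))) g y)) g a)" by (simp only: R[of "(op (op y d (op x g y)) b (op x d (op x b (op a d a))))" "b" "a" "g" "y"])
  finally show ?thesis .
qed

lemma chainPQ:
  fixes op :: "'a \<Rightarrow> 'g \<Rightarrow> 'a \<Rightarrow> 'a"
  assumes L: "\<And>x y z g d. op (op x g y) d z = op (op z g y) d x"
  and R: "\<And>a b c g d. op a g (op b d c) = op b g (op a d c)"
  shows "(op (op (op p1 g1 s) d1 p2) g (op (op q1 h t) k q2)) = (op (op q2 h (op (op t k (op p1 g1 s)) d1 p2)) g q1)"
proof -
  have "(op (op (op p1 g1 s) d1 p2) g (op (op q1 h t) k q2)) = (op (op q1 h t) g (op (op (op p1 g1 s) d1 p2) k q2))" by (simp only: R[of "(op (op p1 g1 s) d1 p2)" "g" "(op q1 h t)" "k" "q2"])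
  also have "\<dots> = (op (op (op (op (op p1 g1 s) d1 p2) k q2) h t) g q1)" by (simp only: L[of "q1" "h" "t" "g" "(op (op (op p1 g1 s) d1 p2) k q2)"])
  also have "\<dots> = (op (op (op (op q2 d1 p2) k (op p1 g1 s)) h t) g q1)" by (simp only: L[of "(op p1 g1 s)" "d1" "p2" "k" "q2"])
  also have "\<dots> = (op (op (op t k (op p1 g1 s)) h (op q2 d1 p2)) g q1)" by (simp only: L[of "(op q2 d1 p2)" "k" "(op p1 g1 s)" "h" "t"])
  also have "\<dots> = (op (op q2 h (op (op t k (op p1 g1 s)) d1 p2)) g q1)" by (simp only: R[of "(op t k (op p1 g1 s))" "h" "q2" "d1" "p2"])
  finally show ?thesis .
qed


lemma main_dir:
  assumes ag: "gamma_AG2_groupoid op" and ir: "intra_regular op" and gb: "gen_bi_ideal op A"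
  shows "gset_prod op (gset_prod op A UNIV) A = A \<and> gset_prod op A A = A"
proof -
  have L: "\<And>x y z g d. op (op x g y) d z = op (op z g y) d x"
    using ag unfolding gamma_AG2_groupoid_def gamma_AG_groupoid_def by blast
  have R: "\<And>a b c g d. op a g (op b d c) = op b g (op a d c)"
    using ag unfolding gamma_AG2_groupoid_def by blast
  have sub: "\<And>p s q g d. p \<in> A \<Longrightarrow> q \<in> A \<Longrightarrow> op (op p g s) d q \<in> A"
    using gb unfolding gen_bi_ideal_def gset_prod_def by blast
  have sub2: "gset_prod op (gset_prod op A UNIV) A \<subseteq> A"
    using gb unfolding gen_bi_ideal_def by blast
  have s1: "A \<subseteq> gset_prod op (gset_prod op A UNIV) A"
  proof
    fix a assume a: "a \<in> A"
    obtain x y b g d where H: "a = op (op x b (op a d a)) g y"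
      using ir unfolding intra_regular_def by blast
    have "a = (op (op a b (op (op (op y d (op x g y)) b (op x d (op x b (op a d a)))) g y)) g a)"
      using chainASA[OF L R H] .
    then show "a \<in> gset_prod op (gset_prod op A UNIV) A"
      unfolding gset_prod_def using a by blast
  qed
  have s2: "A \<subseteq> gset_prod op A A"
  proof
    fix a assume a: "a \<in> A"
    obtain x y b g d where H: "a = op (op x b (op a d a)) g y"
      using ir unfolding intra_regular_def by blast
    have e: "a = (op a g (op (op a d (op (op (op y b x) b x) g y)) d a))"
      using chainAA[OF L R H] .
    have "op (op a d (op (op (op y b x) b x) g y)) d a \<in> A" using sub a by blast
    then show "a \<in> gset_prod op A A"
      unfolding gset_prod_def using a e by blast
  qed
  have s3: "gset_prod op A A \<subseteq> A"
  proof
    fix z assume "z \<in> gset_prod op A A"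
    then obtain p g q where z: "z = op p g q" "p \<in> A" "q \<in> A" unfolding gset_prod_def by blast
    from s1 z(2) obtain p1 s g1 d1 p2 where pe: "p = op (op p1 g1 s) d1 p2" "p1 \<in> A" "p2 \<in> A"
      unfolding gset_prod_def by blast
    from s1 z(3) obtain q1 t h k q2 where qe: "q = op (op q1 h t) k q2" "q1 \<in> A" "q2 \<in> A"
      unfolding gset_prod_def by blast
    have "z = op (op q2 h (op (op t k (op p1 g1 s)) d1 p2)) g q1"
      unfolding z(1) pe(1) qe(1) by (rule chainPQ[of op, OF L R])
    then show "z \<in> A" using sub pe qe by blast
  qed
  show ?thesis using s1 s2 s3 sub2 by blast
qed

theorem mainTheorem5:
  fixes op :: "'a \<Rightarrow> 'g \<Rightarrow> 'a \<Rightarrow> 'a" and A :: "'a set"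
  assumes "gamma_AG2_groupoid op" and "intra_regular op" and "A \<noteq> {}"
  shows "(bi_ideal op A \<longleftrightarrow>
            gset_prod op (gset_prod op A UNIV) A = A \<and> gset_prod op A A = A)
       \<and> (gen_bi_ideal op A \<longleftrightarrow>
            gset_prod op (gset_prod op A UNIV) A = A \<and> gset_prod op A A = A)"
  using main_dir[OF assms(1,2)] assms(3) unfolding bi_ideal_def gen_bi_ideal_def by auto

end
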